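(* Let $R$ be a ring and $M$ a retractable left $R$-module. The following are equivalent: (a) $M$ is uniform and $\mathrm{End}_R(M)$ is a domain; (b) $M$ is uniform and every nonzero endomorphism of $M$ is injective; (c) $\mathrm{End}_R(M)$ is a left Ore domain.
   Context: A left $R$-module $M$ is retractable if $\mathrm{Hom}_R(M,N)\neq0$ for every nonzero submodule $N\subseteq M$. $M$ is uniform if any two nonzero submodules have nonzero intersection. A left Ore domain is a domain $S$ with $Sa\cap Sb\neq0$ for all nonzero $a,b\in S$. Endomorphisms are written on the right, so composition $fg$ means first $f$ then $g$. *)

theory Defs
  imports "HOL-Algebra.Module"
begin

text \<open>The library locale module requires a commutative ring, so we state the
  left-module axioms directly (same axioms as the library, with ring instead of cring).\<close>

definition left_module :: "('a, 'c) ring_scheme \<Rightarrow> ('a, 'b) module \<Rightarrow> bool" where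
  "left_module R M \<longleftrightarrow> ring R \<and> abelian_group M \<and>
     (\<forall>a\<in>carrier R. \<forall>x\<in>carrier M. a \<odot>\<^bsub>M\<^esub> x \<in> carrier M) \<and>
     (\<forall>a\<in>carrier R. \<forall>b\<in>carrier R. \<forall>x\<in>carrier M.
        (a \<oplus>\<^bsub>R\<^esub> b) \<odot>\<^bsub>M\<^esub> x = a \<odot>\<^bsub>M\<^esub> x \<oplus>\<^bsub>M\<^esub> b \<odot>\<^bsub>M\<^esub> x) \<and>
     (\<forall>a\<in>carrier R. \<forall>x\<in>carrier M. \<forall>y\<in>carrier M.
        a \<odot>\<^bsub>M\<^esub> (x \<oplus>\<^bsub>M\<^esub> y) = a \<odot>\<^bsub>M\<^esub> x \<oplus>\<^bsub>M\<^esub> a \<odot>\<^bsub>M\<^esub> y) \<and>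
     (\<forall>a\<in>carrier R. \<forall>b\<in>carrier R. \<forall>x\<in>carrier M.
        (a \<otimes>\<^bsub>R\<^esub> b) \<odot>\<^bsub>M\<^esub> x = a \<odot>\<^bsub>M\<^esub> (b \<odot>\<^bsub>M\<^esub> x)) \<and>
     (\<forall>x\<in>carrier M. \<one>\<^bsub>R\<^esub> \<odot>\<^bsub>M\<^esub> x = x)"

definition lin_hom_into :: "('a, 'c) ring_scheme \<Rightarrow> ('a, 'b) module \<Rightarrow> 'b set \<Rightarrow> ('b \<Rightarrow> 'b) set" where
  "lin_hom_into R M N = {f. f \<in> carrier M \<rightarrow> N \<and> f \<in> extensional (carrier M) \<and>
     (\<forall>x\<in>carrier M. \<forall>y\<in>carrier M. f (x \<oplus>\<^bsub>M\<^esub> y) = f x \<oplus>\<^bsub>M\<^esub> f y) \<and>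
     (\<forall>a\<in>carrier R. \<forall>x\<in>carrier M. f (a \<odot>\<^bsub>M\<^esub> x) = a \<odot>\<^bsub>M\<^esub> f x)}"

definition endos :: "('a, 'c) ring_scheme \<Rightarrow> ('a, 'b) module \<Rightarrow> ('b \<Rightarrow> 'b) set" where
  "endos R M = lin_hom_into R M (carrier M)"

definition zero_map :: "('a, 'b) module \<Rightarrow> 'b \<Rightarrow> 'b" where
  "zero_map M = (\<lambda>x\<in>carrier M. \<zero>\<^bsub>M\<^esub>)"

text \<open>The endomorphism ring End_R(M). Endomorphisms are written on the right,
  so the product f \<otimes> g means first f then g, i.e. g \<circ> f.\<close>

definition End_ring :: "('a, 'c) ring_scheme \<Rightarrow> ('a, 'b) module \<Rightarrow> ('b \<Rightarrow> 'b) ring" where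
  "End_ring R M = \<lparr> carrier = endos R M,
     monoid.mult = (\<lambda>f g. compose (carrier M) g f),
     one = (\<lambda>x\<in>carrier M. x),
     zero = zero_map M,
     add = (\<lambda>f g. \<lambda>x\<in>carrier M. f x \<oplus>\<^bsub>M\<^esub> g x) \<rparr>"

definition retractable :: "('a, 'c) ring_scheme \<Rightarrow> ('a, 'b) module \<Rightarrow> bool" where
  "retractable R M \<longleftrightarrow> (\<forall>N. submodule N R M \<and> N \<noteq> {\<zero>\<^bsub>M\<^esub>} \<longrightarrow>
      (\<exists>f\<in>lin_hom_into R M N. f \<noteq> zero_map M))"

definition uniform :: "('a, 'c) ring_scheme \<Rightarrow> ('a, 'b) module \<Rightarrow> bool" where
  "uniform R M \<longleftrightarrow> carrier M \<noteq> {\<zero>\<^bsub>M\<^esub>} \<and>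
     (\<forall>N1 N2. submodule N1 R M \<and> submodule N2 R M \<and> N1 \<noteq> {\<zero>\<^bsub>M\<^esub>} \<and> N2 \<noteq> {\<zero>\<^bsub>M\<^esub>}
        \<longrightarrow> N1 \<inter> N2 \<noteq> {\<zero>\<^bsub>M\<^esub>})"

definition nc_domain :: "('a, 'c) ring_scheme \<Rightarrow> bool" where
  "nc_domain S \<longleftrightarrow> ring S \<and> \<one>\<^bsub>S\<^esub> \<noteq> \<zero>\<^bsub>S\<^esub> \<and>
     (\<forall>a\<in>carrier S. \<forall>b\<in>carrier S. a \<otimes>\<^bsub>S\<^esub> b = \<zero>\<^bsub>S\<^esub> \<longrightarrow> a = \<zero>\<^bsub>S\<^esub> \<or> b = \<zero>\<^bsub>S\<^esub>)"

definition left_ore_domain :: "('a, 'c) ring_scheme \<Rightarrow> bool" where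
  "left_ore_domain S \<longleftrightarrow> nc_domain S \<and>
     (\<forall>a\<in>carrier S - {\<zero>\<^bsub>S\<^esub>}. \<forall>b\<in>carrier S - {\<zero>\<^bsub>S\<^esub>}.
        \<exists>s\<in>carrier S. \<exists>t\<in>carrier S. s \<otimes>\<^bsub>S\<^esub> a = t \<otimes>\<^bsub>S\<^esub> b \<and> s \<otimes>\<^bsub>S\<^esub> a \<noteq> \<zero>\<^bsub>S\<^esub>)"

end

theory Submission
  imports Defs
begin

locale lmod = abelian_group M for R :: "('a, 'c) ring_scheme" and M :: "('a, 'b) module" (structure) +
  assumes smult_closed: "\<And>a x. a\<in>carrier R \<Longrightarrow> x\<in>carrier M \<Longrightarrow> a \<odot>\<^bsub>M\<^esub> x \<in> carrier M"
  and smult_distr: "\<And>a x y. a\<in>carrier R \<Longrightarrow> x\<in>carrier M \<Longrightarrow> y\<in>carrier M \<Longrightarrow>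
        a \<odot>\<^bsub>M\<^esub> (x \<oplus> y) = a \<odot>\<^bsub>M\<^esub> x \<oplus> a \<odot>\<^bsub>M\<^esub> y"

lemma lmodI: "left_module R M \<Longrightarrow> lmod R M"
  unfolding left_module_def lmod_def lmod_axioms_def by blast

context lmod
begin

lemma smult_zero: "a\<in>carrier R \<Longrightarrow> a \<odot>\<^bsub>M\<^esub> \<zero> = \<zero>"
proof -
  assume a: "a\<in>carrier R"
  have "a \<odot>\<^bsub>M\<^esub> \<zero> \<oplus> a \<odot>\<^bsub>M\<^esub> \<zero> = a \<odot>\<^bsub>M\<^esub> \<zero> \<oplus> \<zero>"
    using smult_distr[OF a, of \<zero> \<zero>] smult_closed[OF a] by simp
  thus ?thesis using smult_closed[OF a] by simp
qed

lemma smult_neg: "a\<in>carrier R \<Longrightarrow> v \<in> carrier M \<Longrightarrow> a \<odot>\<^bsub>M\<^esub> (\<ominus> v) = \<ominus> (a \<odot>\<^bsub>M\<^esub> v)"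
proof -
  assume a: "a\<in>carrier R" and v: "v \<in> carrier M"
  have "a \<odot>\<^bsub>M\<^esub> (\<ominus> v) \<oplus> a \<odot>\<^bsub>M\<^esub> v = \<zero>"
    using smult_distr[OF a, of "\<ominus> v" v] v smult_zero[OF a] by (simp add: l_neg)
  thus ?thesis using a v smult_closed by (simp add: minus_equality)
qed

lemma endoD:
  assumes "f \<in> endos R M"
  shows "\<And>x. x \<in> carrier M \<Longrightarrow> f x \<in> carrier M"
    and "f \<in> extensional (carrier M)"
    and "\<And>x y. x \<in> carrier M \<Longrightarrow> y \<in> carrier M \<Longrightarrow> f (x \<oplus> y) = f x \<oplus> f y"
    and "\<And>a x. a \<in> carrier R \<Longrightarrow> x \<in> carrier M \<Longrightarrow> f (a \<odot>\<^bsub>M\<^esub> x) = a \<odot>\<^bsub>M\<^esub> f x"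
  using assms unfolding endos_def lin_hom_into_def by auto

lemma endoI:
  assumes "\<And>x. x \<in> carrier M \<Longrightarrow> f x \<in> carrier M"
    and "f \<in> extensional (carrier M)"
    and "\<And>x y. x \<in> carrier M \<Longrightarrow> y \<in> carrier M \<Longrightarrow> f (x \<oplus> y) = f x \<oplus> f y"
    and "\<And>a x. a \<in> carrier R \<Longrightarrow> x \<in> carrier M \<Longrightarrow> f (a \<odot>\<^bsub>M\<^esub> x) = a \<odot>\<^bsub>M\<^esub> f x"
  shows "f \<in> endos R M"
  using assms unfolding endos_def lin_hom_into_def by auto

lemma endo_zero: "f \<in> endos R M \<Longrightarrow> f \<zero> = \<zero>"
proof -
  assume f: "f \<in> endos R M"
  have "f \<zero> \<oplus> f \<zero> = f \<zero> \<oplus> \<zero>" using endoD(3)[OF f, of \<zero> \<zero>] endoD(1)[OF f] by simp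
  thus ?thesis using endoD(1)[OF f] by simp
qed

lemma endo_minus: "f \<in> endos R M \<Longrightarrow> x \<in> carrier M \<Longrightarrow> y \<in> carrier M \<Longrightarrow> f (x \<ominus> y) = f x \<ominus> f y"
proof -
  assume f: "f \<in> endos R M" and x: "x \<in> carrier M" and y: "y \<in> carrier M"
  have "f (\<ominus> y) \<oplus> f y = \<zero>" using endoD(3)[OF f, of "\<ominus> y" y] y endo_zero[OF f] by (simp add: l_neg)
  hence "f (\<ominus> y) = \<ominus> f y" using endoD(1)[OF f] y by (simp add: minus_equality)
  thus ?thesis using endoD(3)[OF f] x y by (simp add: minus_eq)
qed

lemma endo_eq_zero: "f \<in> endos R M \<Longrightarrow> f = zero_map M \<longleftrightarrow> (\<forall>x\<in>carrier M. f x = \<zero>)"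
proof
  assume f: "f \<in> endos R M"
  assume h: "\<forall>x\<in>carrier M. f x = \<zero>"
  show "f = zero_map M"
  proof (rule ext)
    fix x show "f x = zero_map M x"
    proof (cases "x \<in> carrier M")
      case True then show ?thesis using h by (simp add: zero_map_def)
    next
      case False then show ?thesis using endoD(2)[OF f] by (simp add: zero_map_def extensional_def)
    qed
  qed
qed (simp add: zero_map_def)

lemma endo_nonzero: "f \<in> endos R M \<Longrightarrow> f \<noteq> zero_map M \<longleftrightarrow> (\<exists>x\<in>carrier M. f x \<noteq> \<zero>)"
  using endo_eq_zero by blast

lemma endo_restrict: "f \<in> endos R M \<Longrightarrow> (\<lambda>x\<in>carrier M. f x) = f"
  by (rule extensional_restrict[OF endoD(2)])

lemma hom_into_endos: "N \<subseteq> carrier M \<Longrightarrow> lin_hom_into R M N \<subseteq> endos R M"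
  unfolding endos_def lin_hom_into_def by auto

lemma submodule_subset: "submodule N R M \<Longrightarrow> N \<subseteq> carrier M"
  by (metis partial_object.select_convs(1) submodule.axioms(1) subgroup.subset)

lemma submoduleI':
  assumes "H \<subseteq> carrier M" "\<zero> \<in> H" "\<And>a. a \<in> H \<Longrightarrow> \<ominus> a \<in> H"
    "\<And>a b. a \<in> H \<Longrightarrow> b \<in> H \<Longrightarrow> a \<oplus> b \<in> H"
    "\<And>a x. a \<in> carrier R \<Longrightarrow> x \<in> H \<Longrightarrow> a \<odot>\<^bsub>M\<^esub> x \<in> H"
  shows "submodule H R M"
  apply (intro submodule.intro subgroup.intro submodule_axioms.intro)
  using assms by (auto simp: a_inv_def)

lemma E_simps:
  "carrier (End_ring R M) = endos R M"
  "f \<otimes>\<^bsub>End_ring R M\<^esub> g = compose (carrier M) g f"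
  "\<one>\<^bsub>End_ring R M\<^esub> = (\<lambda>x\<in>carrier M. x)"
  "\<zero>\<^bsub>End_ring R M\<^esub> = zero_map M"
  "f \<oplus>\<^bsub>End_ring R M\<^esub> g = (\<lambda>x\<in>carrier M. f x \<oplus> g x)"
  by (simp_all add: End_ring_def)

lemma endos_add: "f \<in> endos R M \<Longrightarrow> g \<in> endos R M \<Longrightarrow> (\<lambda>x\<in>carrier M. f x \<oplus> g x) \<in> endos R M"
  apply (rule endoI)
  apply (simp_all add: endoD)
  apply (simp add: endoD a_ac)
  apply (simp add: endoD smult_distr smult_closed)
  done

lemma endos_comp: "f \<in> endos R M \<Longrightarrow> g \<in> endos R M \<Longrightarrow> compose (carrier M) g f \<in> endos R M"
  apply (rule endoI)
  apply (simp_all add: endoD compose_eq smult_closed)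
  done

lemma endos_id: "(\<lambda>x\<in>carrier M. x) \<in> endos R M"
  by (rule endoI) (simp_all add: smult_closed)

lemma endos_zero: "zero_map M \<in> endos R M"
  by (rule endoI) (simp_all add: zero_map_def smult_zero smult_closed)

lemma endos_neg: "f \<in> endos R M \<Longrightarrow> (\<lambda>x\<in>carrier M. \<ominus> f x) \<in> endos R M"
  apply (rule endoI)
  apply (simp_all add: endoD smult_neg smult_closed)
  apply (simp add: endoD minus_add)
  done

lemma End_ring_ring: "ring (End_ring R M)"
proof (rule ringI)
  show "abelian_group (End_ring R M)"
  proof (rule abelian_groupI, simp_all only: E_simps)
    show "\<And>x y. x \<in> endos R M \<Longrightarrow> y \<in> endos R M \<Longrightarrow> (\<lambda>xa\<in>carrier M. x xa \<oplus> y xa) \<in> endos R M"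
      by (rule endos_add)
    show "zero_map M \<in> endos R M" by (rule endos_zero)
    show "\<And>x y z. x \<in> endos R M \<Longrightarrow> y \<in> endos R M \<Longrightarrow> z \<in> endos R M \<Longrightarrow>
        (\<lambda>xa\<in>carrier M. (\<lambda>xa\<in>carrier M. x xa \<oplus> y xa) xa \<oplus> z xa) =
        (\<lambda>xa\<in>carrier M. x xa \<oplus> (\<lambda>xa\<in>carrier M. y xa \<oplus> z xa) xa)"
      by (rule restrict_ext) (simp add: endoD a_assoc)
    show "\<And>x y. x \<in> endos R M \<Longrightarrow> y \<in> endos R M \<Longrightarrow>
        (\<lambda>xa\<in>carrier M. x xa \<oplus> y xa) = (\<lambda>xa\<in>carrier M. y xa \<oplus> x xa)"
      by (rule restrict_ext) (simp add: endoD a_comm)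
    show "\<And>x. x \<in> endos R M \<Longrightarrow> (\<lambda>xa\<in>carrier M. zero_map M xa \<oplus> x xa) = x"
      by (rule extensionalityI[where A="carrier M"]) (simp_all add: endoD zero_map_def)
    show "\<And>x. x \<in> endos R M \<Longrightarrow> \<exists>y\<in>endos R M. (\<lambda>xa\<in>carrier M. y xa \<oplus> x xa) = zero_map M"
    proof -
      fix x assume x: "x \<in> endos R M"
      show "\<exists>y\<in>endos R M. (\<lambda>xa\<in>carrier M. y xa \<oplus> x xa) = zero_map M"
        apply (rule bexI[OF _ endos_neg[OF x]])
        unfolding zero_map_def
        by (rule restrict_ext) (simp add: endoD[OF x] l_neg)
    qed
  qed
  show "monoid (End_ring R M)"
  proof (rule monoidI, simp_all only: E_simps)
    show "\<And>x y. x \<in> endos R M \<Longrightarrow> y \<in> endos R M \<Longrightarrow> compose (carrier M) y x \<in> endos R M"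
      by (rule endos_comp)
    show "(\<lambda>x\<in>carrier M. x) \<in> endos R M" by (rule endos_id)
    show "\<And>x y z. x \<in> endos R M \<Longrightarrow> y \<in> endos R M \<Longrightarrow> z \<in> endos R M \<Longrightarrow>
        compose (carrier M) z (compose (carrier M) y x) = compose (carrier M) (compose (carrier M) z y) x"
      by (rule extensionalityI[where A="carrier M"]) (simp_all add: compose_eq endoD)
    show "\<And>x. x \<in> endos R M \<Longrightarrow> compose (carrier M) x (\<lambda>x\<in>carrier M. x) = x"
      by (rule extensionalityI[where A="carrier M"]) (simp_all add: compose_eq endoD)
    show "\<And>x. x \<in> endos R M \<Longrightarrow> compose (carrier M) (\<lambda>x\<in>carrier M. x) x = x"
      by (rule extensionalityI[where A="carrier M"]) (simp_all add: compose_eq endoD)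
  qed
  show "\<And>x y z. x \<in> carrier (End_ring R M) \<Longrightarrow> y \<in> carrier (End_ring R M) \<Longrightarrow> z \<in> carrier (End_ring R M) \<Longrightarrow>
       (x \<oplus>\<^bsub>End_ring R M\<^esub> y) \<otimes>\<^bsub>End_ring R M\<^esub> z =
       x \<otimes>\<^bsub>End_ring R M\<^esub> z \<oplus>\<^bsub>End_ring R M\<^esub> y \<otimes>\<^bsub>End_ring R M\<^esub> z"
    unfolding E_simps
    by (rule extensionalityI[where A="carrier M"]) (simp_all add: compose_eq endoD)
  show "\<And>x y z. x \<in> carrier (End_ring R M) \<Longrightarrow> y \<in> carrier (End_ring R M) \<Longrightarrow> z \<in> carrier (End_ring R M) \<Longrightarrow>
       z \<otimes>\<^bsub>End_ring R M\<^esub> (x \<oplus>\<^bsub>End_ring R M\<^esub> y) =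
       z \<otimes>\<^bsub>End_ring R M\<^esub> x \<oplus>\<^bsub>End_ring R M\<^esub> z \<otimes>\<^bsub>End_ring R M\<^esub> y"
    unfolding E_simps
    by (rule extensionalityI[where A="carrier M"]) (simp_all add: compose_eq endoD)
qed

lemma endo_neg: "f \<in> endos R M \<Longrightarrow> y \<in> carrier M \<Longrightarrow> f (\<ominus> y) = \<ominus> f y"
proof -
  assume f: "f \<in> endos R M" and y: "y \<in> carrier M"
  have "f (\<ominus> y) \<oplus> f y = \<zero>" using endoD(3)[OF f, of "\<ominus> y" y] y endo_zero[OF f] by (simp add: l_neg)
  thus "f (\<ominus> y) = \<ominus> f y" using endoD(1)[OF f] y by (simp add: minus_equality)
qed

lemma submoduleD:
  assumes "submodule N R M"
  shows "\<zero> \<in> N" "\<And>a. a \<in> N \<Longrightarrow> \<ominus> a \<in> N" "\<And>a b. a \<in> N \<Longrightarrow> b \<in> N \<Longrightarrow> a \<oplus> b \<in> N"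
    "\<And>a x. a \<in> carrier R \<Longrightarrow> x \<in> N \<Longrightarrow> a \<odot>\<^bsub>M\<^esub> x \<in> N"
proof -
  have sg: "subgroup N (add_monoid M)" by (rule submodule.axioms(1)[OF assms])
  show "\<zero> \<in> N" using subgroup.one_closed[OF sg] by simp
  show "\<And>a. a \<in> N \<Longrightarrow> \<ominus> a \<in> N" using subgroup.m_inv_closed[OF sg] unfolding a_inv_def by simp
  show "\<And>a b. a \<in> N \<Longrightarrow> b \<in> N \<Longrightarrow> a \<oplus> b \<in> N" using subgroup.m_closed[OF sg] by simp
  show "\<And>a x. a \<in> carrier R \<Longrightarrow> x \<in> N \<Longrightarrow> a \<odot>\<^bsub>M\<^esub> x \<in> N"
    by (rule submodule.smult_closed[OF assms])
qed

lemma kernel_sub: "f \<in> endos R M \<Longrightarrow> submodule {x\<in>carrier M. f x = \<zero>} R M"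
  by (rule submoduleI') (auto simp: endo_zero endo_neg endoD smult_closed smult_zero)

lemma image_sub: "f \<in> endos R M \<Longrightarrow> submodule (f ` carrier M) R M"
proof (rule submoduleI')
  assume f: "f \<in> endos R M"
  show "f ` carrier M \<subseteq> carrier M" using endoD(1)[OF f] by auto
  show "\<zero> \<in> f ` carrier M" using endo_zero[OF f] zero_closed by (metis image_eqI)
  show "\<And>a. a \<in> f ` carrier M \<Longrightarrow> \<ominus> a \<in> f ` carrier M"
  proof -
    fix a assume "a \<in> f ` carrier M"
    then obtain x where x: "x \<in> carrier M" "a = f x" by blast
    hence "\<ominus> a = f (\<ominus> x)" using endo_neg[OF f] by simp
    thus "\<ominus> a \<in> f ` carrier M" using x by blast
  qed
  show "\<And>a b. a \<in> f ` carrier M \<Longrightarrow> b \<in> f ` carrier M \<Longrightarrow> a \<oplus> b \<in> f ` carrier M"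
  proof -
    fix a b assume "a \<in> f ` carrier M" "b \<in> f ` carrier M"
    then obtain x y where x: "x \<in> carrier M" "a = f x" "y \<in> carrier M" "b = f y" by blast
    hence "a \<oplus> b = f (x \<oplus> y)" using endoD(3)[OF f] by simp
    thus "a \<oplus> b \<in> f ` carrier M" using x by blast
  qed
  show "\<And>a x. a \<in> carrier R \<Longrightarrow> x \<in> f ` carrier M \<Longrightarrow> a \<odot>\<^bsub>M\<^esub> x \<in> f ` carrier M"
  proof -
    fix a b assume a: "a \<in> carrier R" and "b \<in> f ` carrier M"
    then obtain x where x: "x \<in> carrier M" "b = f x" by blast
    hence "a \<odot>\<^bsub>M\<^esub> b = f (a \<odot>\<^bsub>M\<^esub> x)" using endoD(4)[OF f] a by simp
    thus "a \<odot>\<^bsub>M\<^esub> b \<in> f ` carrier M" using x a smult_closed by blast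
  qed
qed

lemma int_sub: "submodule N1 R M \<Longrightarrow> submodule N2 R M \<Longrightarrow> submodule (N1 \<inter> N2) R M"
  apply (rule submoduleI')
  using submodule_subset apply blast
  by (simp_all add: submoduleD)

lemma hom_intoD: "f \<in> lin_hom_into R M N \<Longrightarrow> x \<in> carrier M \<Longrightarrow> f x \<in> N"
  unfolding lin_hom_into_def by auto

lemma dom_inj:
  assumes dom: "nc_domain (End_ring R M)" and ret: "retractable R M"
    and f: "f \<in> endos R M" and fnz: "f \<noteq> zero_map M"
  shows "inj_on f (carrier M)"
proof (rule inj_onI)
  fix x y assume x: "x \<in> carrier M" and y: "y \<in> carrier M" and fxy: "f x = f y"
  show "x = y"
  proof (rule ccontr)
    assume xy: "x \<noteq> y"
    let ?K = "{z\<in>carrier M. f z = \<zero>}"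
    have "f (x \<ominus> y) = \<zero>" using endo_minus[OF f x y] fxy endoD(1)[OF f y] by (simp add: minus_eq r_neg)
    hence zK: "x \<ominus> y \<in> ?K" using x y by simp
    have "x \<ominus> y \<noteq> \<zero>"
    proof
      assume "x \<ominus> y = \<zero>"
      hence "x \<ominus> y \<oplus> y = y" using y by simp
      moreover have "x \<ominus> y \<oplus> y = x" using x y by (simp add: minus_eq a_assoc l_neg)
      ultimately show False using xy by simp
    qed
    hence Knz: "?K \<noteq> {\<zero>}" using zK by blast
    obtain g where g: "g \<in> lin_hom_into R M ?K" "g \<noteq> zero_map M"
      using ret kernel_sub[OF f] Knz unfolding retractable_def by blast
    have gE: "g \<in> endos R M" using g(1) hom_into_endos[of ?K] by blast
    have "compose (carrier M) f g = zero_map M"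
      using endo_eq_zero[OF endos_comp[OF gE f]] hom_intoD[OF g(1)] by (simp add: compose_eq)
    hence "g \<otimes>\<^bsub>End_ring R M\<^esub> f = \<zero>\<^bsub>End_ring R M\<^esub>" by (simp add: E_simps)
    hence "g = zero_map M \<or> f = zero_map M"
      using dom gE f unfolding nc_domain_def by (simp add: E_simps)
    thus False using g(2) fnz by blast
  qed
qed

lemma inj_dom:
  assumes inj: "\<forall>f\<in>endos R M. f \<noteq> zero_map M \<longrightarrow> inj_on f (carrier M)"
    and nz: "carrier M \<noteq> {\<zero>}"
  shows "nc_domain (End_ring R M)"
  unfolding nc_domain_def
proof (intro conjI ballI impI)
  show "ring (End_ring R M)" by (rule End_ring_ring)
  obtain x where x: "x \<in> carrier M" "x \<noteq> \<zero>" using nz zero_closed by blast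
  show "\<one>\<^bsub>End_ring R M\<^esub> \<noteq> \<zero>\<^bsub>End_ring R M\<^esub>"
  proof
    assume "\<one>\<^bsub>End_ring R M\<^esub> = \<zero>\<^bsub>End_ring R M\<^esub>"
    hence "(\<lambda>x\<in>carrier M. x) x = zero_map M x" by (simp add: E_simps)
    thus False using x by (simp add: zero_map_def)
  qed
  fix a b assume a: "a \<in> carrier (End_ring R M)" and b: "b \<in> carrier (End_ring R M)"
    and ab: "a \<otimes>\<^bsub>End_ring R M\<^esub> b = \<zero>\<^bsub>End_ring R M\<^esub>"
  show "a = \<zero>\<^bsub>End_ring R M\<^esub> \<or> b = \<zero>\<^bsub>End_ring R M\<^esub>"
  proof (rule ccontr)
    assume "\<not> ?thesis"
    hence anz: "a \<noteq> zero_map M" and bnz: "b \<noteq> zero_map M" by (auto simp: E_simps)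
    have aE: "a \<in> endos R M" and bE: "b \<in> endos R M" using a b by (auto simp: E_simps)
    obtain y where y: "y \<in> carrier M" "a y \<noteq> \<zero>" using endo_nonzero[OF aE] anz by blast
    have "compose (carrier M) b a = zero_map M" using ab by (simp add: E_simps)
    hence "b (a y) = \<zero>" using y(1) endo_eq_zero[OF endos_comp[OF aE bE]] by (simp add: compose_eq)
    hence "b (a y) = b \<zero>" using endo_zero[OF bE] by simp
    hence "a y = \<zero>" using inj bE bnz endoD(1)[OF aE y(1)] by (meson inj_onD zero_closed)
    thus False using y(2) by simp
  qed
qed

lemma lift:
  assumes aE: "a \<in> endos R M" and ainj: "inj_on a (carrier M)" and hE: "h \<in> endos R M"
    and sub: "h ` carrier M \<subseteq> a ` carrier M"
  shows "\<exists>s\<in>endos R M. compose (carrier M) a s = h"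
proof -
  define s where "s = (\<lambda>x\<in>carrier M. inv_into (carrier M) a (h x))"
  have sc: "\<And>x. x \<in> carrier M \<Longrightarrow> s x \<in> carrier M"
  proof -
    fix x assume x: "x \<in> carrier M"
    hence "h x \<in> a ` carrier M" using sub by blast
    thus "s x \<in> carrier M" using x unfolding s_def by (simp add: inv_into_into)
  qed
  have as: "\<And>x. x \<in> carrier M \<Longrightarrow> a (s x) = h x"
  proof -
    fix x assume x: "x \<in> carrier M"
    hence "h x \<in> a ` carrier M" using sub by blast
    thus "a (s x) = h x" using x unfolding s_def by (simp add: f_inv_into_f)
  qed
  have sE: "s \<in> endos R M"
  proof (rule endoI)
    show "\<And>x. x \<in> carrier M \<Longrightarrow> s x \<in> carrier M" by (rule sc)
    show "s \<in> extensional (carrier M)" unfolding s_def by simp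
    show "\<And>x y. x \<in> carrier M \<Longrightarrow> y \<in> carrier M \<Longrightarrow> s (x \<oplus> y) = s x \<oplus> s y"
    proof -
      fix x y assume x: "x \<in> carrier M" and y: "y \<in> carrier M"
      have "a (s (x \<oplus> y)) = a (s x \<oplus> s y)"
        using as x y endoD(3)[OF aE] endoD(3)[OF hE] sc by simp
      thus "s (x \<oplus> y) = s x \<oplus> s y" using ainj sc x y by (meson a_closed inj_onD)
    qed
    show "\<And>c x. c \<in> carrier R \<Longrightarrow> x \<in> carrier M \<Longrightarrow> s (c \<odot>\<^bsub>M\<^esub> x) = c \<odot>\<^bsub>M\<^esub> s x"
    proof -
      fix c x assume c: "c \<in> carrier R" and x: "x \<in> carrier M"
      have "a (s (c \<odot>\<^bsub>M\<^esub> x)) = a (c \<odot>\<^bsub>M\<^esub> s x)"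
        using as x c endoD(4)[OF aE] endoD(4)[OF hE] sc smult_closed by simp
      thus "s (c \<odot>\<^bsub>M\<^esub> x) = c \<odot>\<^bsub>M\<^esub> s x" using ainj sc x c smult_closed by (meson inj_onD)
    qed
  qed
  have "compose (carrier M) a s = h"
    by (rule extensionalityI[where A="carrier M"]) (simp_all add: compose_eq as endoD[OF hE])
  thus ?thesis using sE by blast
qed

lemma image_nz: "f \<in> endos R M \<Longrightarrow> f \<noteq> zero_map M \<Longrightarrow> f ` carrier M \<noteq> {\<zero>}"
  using endo_nonzero by blast

lemma inj_ore:
  assumes unif: "uniform R M" and ret: "retractable R M"
    and inj: "\<forall>f\<in>endos R M. f \<noteq> zero_map M \<longrightarrow> inj_on f (carrier M)"
    and aE: "a \<in> endos R M" and anz: "a \<noteq> zero_map M"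
    and bE: "b \<in> endos R M" and bnz: "b \<noteq> zero_map M"
  shows "\<exists>s\<in>endos R M. \<exists>t\<in>endos R M. compose (carrier M) a s = compose (carrier M) b t
           \<and> compose (carrier M) a s \<noteq> zero_map M"
proof -
  let ?N = "a ` carrier M \<inter> b ` carrier M"
  have Nsub: "submodule ?N R M" by (rule int_sub[OF image_sub[OF aE] image_sub[OF bE]])
  have "?N \<noteq> {\<zero>}" using unif image_sub[OF aE] image_sub[OF bE] image_nz[OF aE anz] image_nz[OF bE bnz]
    unfolding uniform_def by blast
  then obtain h where h: "h \<in> lin_hom_into R M ?N" "h \<noteq> zero_map M"
    using ret Nsub unfolding retractable_def by blast
  have hE: "h \<in> endos R M" using h(1) hom_into_endos[OF submodule_subset[OF Nsub]] by blast
  have "h ` carrier M \<subseteq> ?N" using hom_intoD[OF h(1)] by blast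
  then obtain s t where "s \<in> endos R M" "compose (carrier M) a s = h" "t \<in> endos R M" "compose (carrier M) b t = h"
    using lift[OF aE _ hE] lift[OF bE _ hE] inj aE anz bE bnz by (metis le_inf_iff)
  thus ?thesis using h(2) by (intro bexI[where x=s] bexI[where x=t]) auto
qed

lemma ore_unif:
  assumes ore: "left_ore_domain (End_ring R M)" and ret: "retractable R M"
  shows "uniform R M"
  unfolding uniform_def
proof (intro conjI allI impI)
  have dom: "nc_domain (End_ring R M)" using ore unfolding left_ore_domain_def by blast
  show "carrier M \<noteq> {\<zero>}"
  proof
    assume c: "carrier M = {\<zero>}"
    have "(\<lambda>x\<in>carrier M. x) = zero_map M" unfolding zero_map_def
      by (rule restrict_ext) (simp add: c)
    thus False using dom unfolding nc_domain_def by (simp add: E_simps)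
  qed
  fix N1 N2 assume H: "submodule N1 R M \<and> submodule N2 R M \<and> N1 \<noteq> {\<zero>} \<and> N2 \<noteq> {\<zero>}"
  obtain f1 where f1: "f1 \<in> lin_hom_into R M N1" "f1 \<noteq> zero_map M"
    using ret H unfolding retractable_def by blast
  obtain f2 where f2: "f2 \<in> lin_hom_into R M N2" "f2 \<noteq> zero_map M"
    using ret H unfolding retractable_def by blast
  have f1E: "f1 \<in> endos R M" using f1(1) hom_into_endos[OF submodule_subset] H by blast
  have f2E: "f2 \<in> endos R M" using f2(1) hom_into_endos[OF submodule_subset] H by blast
  have "\<exists>s\<in>endos R M. \<exists>t\<in>endos R M.
    compose (carrier M) f1 s = compose (carrier M) f2 t \<and> compose (carrier M) f1 s \<noteq> zero_map M"
    using ore f1E f2E f1(2) f2(2) unfolding left_ore_domain_def by (simp add: E_simps)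
  then obtain s t where st: "s \<in> endos R M" "t \<in> endos R M"
    "compose (carrier M) f1 s = compose (carrier M) f2 t" "compose (carrier M) f1 s \<noteq> zero_map M"
    by blast
  obtain x where x: "x \<in> carrier M" "compose (carrier M) f1 s x \<noteq> \<zero>"
    using endo_nonzero[OF endos_comp[OF st(1) f1E]] st(4) by blast
  have "f1 (s x) \<in> N1" using hom_intoD[OF f1(1)] endoD(1)[OF st(1) x(1)] .
  moreover have "f1 (s x) \<in> N2"
  proof -
    have "f1 (s x) = f2 (t x)" using st(3) x(1) by (metis compose_eq)
    thus ?thesis using hom_intoD[OF f2(1)] endoD(1)[OF st(2) x(1)] by simp
  qed
  moreover have "f1 (s x) \<noteq> \<zero>" using x by (simp add: compose_eq)
  ultimately show "N1 \<inter> N2 \<noteq> {\<zero>}" by blast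
qed

end

theorem proposition3p1:
  fixes R :: "('a, 'c) ring_scheme" and M :: "('a, 'b) module"
  assumes "ring R" and "left_module R M" and "retractable R M"
  shows "((uniform R M \<and> nc_domain (End_ring R M)) \<longleftrightarrow>
          (uniform R M \<and> (\<forall>f\<in>endos R M. f \<noteq> zero_map M \<longrightarrow> inj_on f (carrier M))))
       \<and> ((uniform R M \<and> (\<forall>f\<in>endos R M. f \<noteq> zero_map M \<longrightarrow> inj_on f (carrier M))) \<longleftrightarrow>
          left_ore_domain (End_ring R M))"
proof -
  interpret lmod R M by (rule lmodI[OF assms(2)])
  have ret: "retractable R M" by fact
  have AB: "(uniform R M \<and> nc_domain (End_ring R M)) \<longleftrightarrow>
          (uniform R M \<and> (\<forall>f\<in>endos R M. f \<noteq> zero_map M \<longrightarrow> inj_on f (carrier M)))"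
    using dom_inj[OF _ ret] inj_dom unfolding uniform_def by blast
  have BC1: "left_ore_domain (End_ring R M)"
    if u: "uniform R M" and inj: "\<forall>f\<in>endos R M. f \<noteq> zero_map M \<longrightarrow> inj_on f (carrier M)"
  proof -
    have "nc_domain (End_ring R M)" using inj_dom[OF inj] u unfolding uniform_def by blast
    moreover have "\<forall>a\<in>carrier (End_ring R M) - {\<zero>\<^bsub>End_ring R M\<^esub>}. \<forall>b\<in>carrier (End_ring R M) - {\<zero>\<^bsub>End_ring R M\<^esub>}.
        \<exists>s\<in>carrier (End_ring R M). \<exists>t\<in>carrier (End_ring R M).
          s \<otimes>\<^bsub>End_ring R M\<^esub> a = t \<otimes>\<^bsub>End_ring R M\<^esub> b \<and> s \<otimes>\<^bsub>End_ring R M\<^esub> a \<noteq> \<zero>\<^bsub>End_ring R M\<^esub>"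
      unfolding E_simps using inj_ore[OF u ret inj] by blast
    ultimately show ?thesis unfolding left_ore_domain_def by blast
  qed
  have BC2: "uniform R M \<and> (\<forall>f\<in>endos R M. f \<noteq> zero_map M \<longrightarrow> inj_on f (carrier M))"
    if o: "left_ore_domain (End_ring R M)"
  proof -
    have "nc_domain (End_ring R M)" using o unfolding left_ore_domain_def by blast
    thus ?thesis using ore_unif[OF o ret] dom_inj[OF _ ret] by blast
  qed
  show ?thesis using AB BC1 BC2 by blast
qed

end
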